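(* Let $n\ge 2$ be an integer, let $A$ be a complex Banach algebra, and let $0<r<\frac{1}{2}$, $\theta\in[0,\infty)$ be real numbers. Suppose $f:A\to A$ satisfies $$\Big\|\mu f\Big(\frac{x+y}{2}\Big)+\mu f\Big(\frac{x-y}{2}\Big)-f(\mu x)+f(a^n)-\big(f(a)a^{n-1}+af(a)a^{n-2}+\cdots+a^{n-2}f(a)a+a^{n-1}f(a)\big)\Big\|\le \theta(\|x\|^r\|y\|^r+\|a\|^{2r})$$ for all $\mu\in\mathbb{T}$ and all $x,y,a\in A$. Then there exists a unique $n$-Jordan derivation $D:A\to A$ such that $$\|f(x)-D(x)\|\le \frac{3^r\theta}{2-2^r}\|x\|^{2r}$$ for all $x\in A$.
   Context: $\mathbb{T}=\{\mu\in\mathbb{C}:|\mu|=1\}$. For an integer $n\ge 2$, an $n$-Jordan derivation on an algebra $A$ is a linear map $D:A\to A$ such that $D(a^n)=D(a)a^{n-1}+aD(a)a^{n-2}+\cdots+a^{n-2}D(a)a+a^{n-1}D(a)$ for all $a\in A$. *)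

theory Defs
  imports "HOL-Analysis.Analysis"
begin

class complex_banach_algebra = real_normed_algebra + banach +
  fixes scaleC :: "complex \<Rightarrow> 'a \<Rightarrow> 'a"  (infixr "*\<^sub>C" 75)
  assumes scaleC_add_right: "c *\<^sub>C (x + y) = c *\<^sub>C x + c *\<^sub>C y"
    and scaleC_add_left: "(b + c) *\<^sub>C x = b *\<^sub>C x + c *\<^sub>C x"
    and scaleC_scaleC: "b *\<^sub>C (c *\<^sub>C x) = (b * c) *\<^sub>C x"
    and scaleC_one: "1 *\<^sub>C x = x"
    and scaleC_of_real: "complex_of_real t *\<^sub>C x = t *\<^sub>R x"
    and norm_scaleC: "norm (c *\<^sub>C x) = cmod c * norm x"
    and mult_scaleC_left: "(c *\<^sub>C x) * y = c *\<^sub>C (x * y)"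
    and mult_scaleC_right: "x * (c *\<^sub>C y) = c *\<^sub>C (x * y)"

text \<open>Positive powers in a (possibly non-unital) algebra: spow a k = a^(k+1).\<close>
fun spow :: "'a::semigroup_mult \<Rightarrow> nat \<Rightarrow> 'a" where
  "spow a 0 = a"
| "spow a (Suc k) = a * spow a k"

text \<open>For n \<ge> 2: D(a)a^(n-1) + a D(a) a^(n-2) + ... + a^(n-2) D(a) a + a^(n-1) D(a).\<close>
definition jordan_sum :: "nat \<Rightarrow> ('a::{semigroup_mult,comm_monoid_add} \<Rightarrow> 'a) \<Rightarrow> 'a \<Rightarrow> 'a" where
  "jordan_sum n D a =
     D a * spow a (n - 2)
     + (\<Sum>k\<in>{1..n-2}. spow a (k - 1) * D a * spow a (n - 2 - k))
     + spow a (n - 2) * D a"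

definition n_jordan_derivation :: "nat \<Rightarrow> ('a::complex_banach_algebra \<Rightarrow> 'a) \<Rightarrow> bool" where
  "n_jordan_derivation n D \<longleftrightarrow>
     (\<forall>x y. D (x + y) = D x + D y) \<and> (\<forall>c x. D (c *\<^sub>C x) = c *\<^sub>C D x) \<and>
     (\<forall>a. D (spow a (n - 1)) = jordan_sum n D a)"

end

theory Submission
  imports Defs
begin

lemma spow_zero: "spow (0::'a::{semigroup_mult,mult_zero}) k = 0"
  by (induct k) auto

lemma spow_scale: "spow (t *\<^sub>R (a::'a::real_normed_algebra)) k = t^(Suc k) *\<^sub>R spow a k"
  by (induct k) (auto simp: mult_scaleR_left mult_scaleR_right)

lemma jordan_scale:
  fixes g :: "'a::real_normed_algebra \<Rightarrow> 'a"
  assumes n: "n \<ge> 2" and g: "g (t *\<^sub>R a) = t *\<^sub>R g a"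
  shows "jordan_sum n g (t *\<^sub>R a) = t^n *\<^sub>R jordan_sum n g a"
proof -
  have e1: "t * t ^ (n - 1) = t^n" using n by (metis Suc_diff_1 not_numeral_le_zero not_gr0 power_Suc)
  have "(\<Sum>k\<in>{1..n-2}. spow (t *\<^sub>R a) (k - 1) * g (t *\<^sub>R a) * spow (t *\<^sub>R a) (n - 2 - k))
      = (\<Sum>k\<in>{1..n-2}. t^n *\<^sub>R (spow a (k - 1) * g a * spow a (n - 2 - k)))"
  proof (rule sum.cong)
    fix k assume k: "k \<in> {1..n-2}"
    have ex: "t ^ Suc (k - 1) * (t * t ^ Suc (n - 2 - k)) = t^n"
    proof -
      have "Suc (k - 1) + (1 + Suc (n - 2 - k)) = n" using k n by auto
      then show ?thesis by (metis power_add power_one_right)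
    qed
    show "spow (t *\<^sub>R a) (k - 1) * g (t *\<^sub>R a) * spow (t *\<^sub>R a) (n - 2 - k)
      = t^n *\<^sub>R (spow a (k - 1) * g a * spow a (n - 2 - k))"
      by (simp add: spow_scale g mult_scaleR_left mult_scaleR_right ex[symmetric])
  qed simp
  moreover have "Suc (n-2) = n - 1" using n by auto
  ultimately show ?thesis using e1
    unfolding jordan_sum_def
    by (simp add: spow_scale g mult_scaleR_left mult_scaleR_right scaleR_add_right scaleR_sum_right mult.commute)
qed

lemma vanish:
  fixes N C b c :: real
  assumes "0 \<le> N" "0 < b" "b < c" "\<And>k. c^k * N \<le> C * b^k"
  shows "N = 0"
proof -
  have c0: "c > 0" using assms by auto
  have le: "N \<le> C * (b/c)^k" for k
    using assms(4)[of k] c0 by (simp add: power_divide field_simps)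
  have "(\<lambda>k. C * (b/c)^k) \<longlonglongrightarrow> C * 0"
    by (intro tendsto_mult tendsto_const LIMSEQ_power_zero) (use assms c0 in auto)
  then have "N \<le> 0" using le by (simp add: LIMSEQ_le_const)
  then show ?thesis using assms by auto
qed

lemma additive_zero:
  fixes g :: "'a::real_vector \<Rightarrow> 'b::real_vector"
  assumes "\<And>x y. g (x + y) = g x + g y"
  shows "g 0 = (0::'b::real_vector)"
proof -
  have "g 0 = g 0 + g 0" using assms[of 0 0] by simp
  then show ?thesis by (metis add_cancel_right_right)
qed

lemma additive_nat:
  assumes "\<And>x y. g (x + y) = g x + g y"
  shows "g (real m *\<^sub>R (x::'a::real_vector)) = real m *\<^sub>R (g x::'b::real_vector)"
proof (induct m)
  case 0 then show ?case using additive_zero[of g, OF assms] by simp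
next
  case (Suc m)
  have "real (Suc m) *\<^sub>R x = real m *\<^sub>R x + x" by (simp add: algebra_simps)
  then show ?case using Suc by (simp add: assms algebra_simps)
qed

lemma pow2_powr: "((2::real)^k) powr s = (2 powr s)^k"
  by (metis powr_realpow powr_powr powr_power zero_less_numeral mult.commute mult_2 zero_neq_numeral)

lemma scaleC_zero: "(0::complex) *\<^sub>C (x::'a::complex_banach_algebra) = 0"
  using norm_scaleC[of 0 x] by simp

theorem corollary2p6:
  fixes f :: "'a::complex_banach_algebra \<Rightarrow> 'a" and n :: nat and r \<theta> :: real
  assumes "n \<ge> 2" and "0 < r" and "r < 1/2" and "\<theta> \<ge> 0"
    and "\<And>\<mu> x y a. cmod \<mu> = 1 \<Longrightarrow>
      norm (\<mu> *\<^sub>C f ((1/2) *\<^sub>R (x + y)) + \<mu> *\<^sub>C f ((1/2) *\<^sub>R (x - y)) - f (\<mu> *\<^sub>C x)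
            + f (spow a (n - 1)) - jordan_sum n f a)
      \<le> \<theta> * (norm x powr r * norm y powr r + norm a powr (2 * r))"
  shows "\<exists>!D. n_jordan_derivation n D \<and>
           (\<forall>x. norm (f x - D x) \<le> 3 powr r * \<theta> / (2 - 2 powr r) * norm x powr (2 * r))"
proof -
  note P = assms(5)
  have n2: "n \<ge> 2" by fact
  have f0: "f 0 = 0"
  proof -
    have "norm (f 0 + f 0) \<le> 0"
      using P[of 1 0 0 0] assms(2) by (simp add: scaleC_one spow_zero jordan_sum_def)
    then have "f 0 + f 0 = 0" by simp
    then have "2 *\<^sub>R f 0 = 0" by (simp add: scaleR_2)
    then show ?thesis by simp
  qed
  have half: "f (\<mu> *\<^sub>C x) = \<mu> *\<^sub>C (f ((1/2) *\<^sub>R x) + f ((1/2) *\<^sub>R x))" if "cmod \<mu> = 1" for \<mu> x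
  proof -
    have "norm (\<mu> *\<^sub>C f ((1/2) *\<^sub>R x) + \<mu> *\<^sub>C f ((1/2) *\<^sub>R x) - f (\<mu> *\<^sub>C x)) \<le> 0"
      using P[of \<mu> x 0 0] that assms(2) f0 by (simp add: spow_zero jordan_sum_def)
    then show ?thesis by (simp add: scaleC_add_right)
  qed
  have hom: "f (\<mu> *\<^sub>C x) = \<mu> *\<^sub>C f x" if "cmod \<mu> = 1" for \<mu> x
    using half[OF that, of x] half[of 1 x] by (simp add: scaleC_one)
  have dbl: "f (2 *\<^sub>R x) = 2 *\<^sub>R f x" for x
    using half[of 1 "2 *\<^sub>R x"] by (simp add: scaleC_one scaleR_2)
  have pow: "f ((2^k) *\<^sub>R x) = (2^k) *\<^sub>R f x" for k x
  proof (induct k)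
    case (Suc k)
    have "f ((2^Suc k) *\<^sub>R x) = f (2 *\<^sub>R ((2^k) *\<^sub>R x))" by (simp only: scaleR_scaleR power_Suc)
    also have "\<dots> = 2 *\<^sub>R (2^k) *\<^sub>R f x" by (simp only: dbl Suc)
    finally show ?case by (simp only: scaleR_scaleR power_Suc)
  qed simp
  have b1: "(2::real) powr (2*r) < 2"
    using powr_less_mono[of "2*r" 1 2] assms(3) by simp
  have b0: "(0::real) < 2 powr (2*r)" by simp
  have sq: "((2::real) powr r)^k * (2 powr r)^k = (2 powr (2*r))^k" for k
    by (metis power_mult_distrib powr_add mult_2)
  have defect: "norm (f u + f v - f (u+v)) \<le> \<theta> * (norm (u+v) powr r * norm (u-v) powr r)" for u v
  proof -
    have e1: "(1/2) *\<^sub>R ((u+v) + (u-v)) = u"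
    proof -
      have "(u+v) + (u-v) = 2 *\<^sub>R u" by (simp add: scaleR_2)
      then show ?thesis by simp
    qed
    have e2: "(1/2) *\<^sub>R ((u+v) - (u-v)) = v"
    proof -
      have "(u+v) - (u-v) = 2 *\<^sub>R v" by (simp add: scaleR_2)
      then show ?thesis by simp
    qed
    show ?thesis using P[of 1 "u+v" "u-v" 0] e1 e2 f0 assms(2)
      by (simp add: scaleC_one spow_zero jordan_sum_def)
  qed
  have add: "f (u + v) = f u + f v" for u v
  proof -
    let ?N = "norm (f u + f v - f (u+v))"
    let ?C = "\<theta> * (norm (u+v) powr r * norm (u-v) powr r)"
    have "?N = 0"
    proof (rule vanish[where b="2 powr (2*r)" and c=2 and C="?C"])
      fix k :: nat
      let ?t = "(2::real)^k"
      have "f (?t *\<^sub>R u) + f (?t *\<^sub>R v) - f (?t *\<^sub>R u + ?t *\<^sub>R v) = ?t *\<^sub>R (f u + f v - f (u+v))"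
        by (simp add: pow scaleR_add_right[symmetric] scaleR_diff_right)
      then have "?t * ?N = norm (f (?t *\<^sub>R u) + f (?t *\<^sub>R v) - f (?t *\<^sub>R u + ?t *\<^sub>R v))"
        by simp
      also have "\<dots> \<le> \<theta> * (norm (?t *\<^sub>R u + ?t *\<^sub>R v) powr r * norm (?t *\<^sub>R u - ?t *\<^sub>R v) powr r)"
        by (rule defect)
      also have "\<dots> = \<theta> * ((?t * norm (u+v)) powr r * (?t * norm (u-v)) powr r)"
        by (simp add: scaleR_add_right[symmetric] scaleR_diff_right[symmetric])
      also have "\<dots> = ?C * ((2 powr r)^k * (2 powr r)^k)"
        by (simp add: powr_mult pow2_powr)
      also have "\<dots> = ?C * (2 powr (2*r))^k" by (simp add: sq)
      finally show "2^k * ?N \<le> ?C * (2 powr (2*r))^k" .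
    qed (use b1 b0 in auto)
    then show ?thesis by simp
  qed
  have realhom_small: "f (t *\<^sub>R x) = t *\<^sub>R f x" if "\<bar>t\<bar> \<le> 2" for t x
  proof -
    define \<mu> where "\<mu> = Complex (t/2) (sqrt (1 - (t/2)^2))"
    have le: "(t/2)^2 \<le> 1" proof -
      have "\<bar>t/2\<bar> \<le> 1" using that by simp
      then show ?thesis by (metis abs_le_square_iff abs_one one_power2)
    qed
    have m1: "cmod \<mu> = 1" unfolding \<mu>_def cmod_def using le by simp
    have m2: "cmod (cnj \<mu>) = 1" using m1 by simp
    have s: "\<mu> + cnj \<mu> = complex_of_real t" unfolding \<mu>_def by (simp add: complex_eq_iff)
    have "t *\<^sub>R x = \<mu> *\<^sub>C x + cnj \<mu> *\<^sub>C x"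
      by (simp add: scaleC_add_left[symmetric] s scaleC_of_real)
    then have "f (t *\<^sub>R x) = \<mu> *\<^sub>C f x + cnj \<mu> *\<^sub>C f x"
      by (simp add: add hom m1 m2)
    also have "\<dots> = t *\<^sub>R f x"
      by (simp add: scaleC_add_left[symmetric] s scaleC_of_real)
    finally show ?thesis .
  qed
  have realhom: "f (t *\<^sub>R x) = t *\<^sub>R f x" for t x
  proof -
    define m where "m = nat \<lceil>\<bar>t\<bar>\<rceil> + 1"
    have mpos: "real m > 0" unfolding m_def by (simp add: add_pos_nonneg)
    have "\<bar>t\<bar> \<le> real m" unfolding m_def by linarith
    then have tm: "\<bar>t / real m\<bar> \<le> 2" using mpos by (simp add: divide_le_eq)
    have "t *\<^sub>R x = real m *\<^sub>R ((t / real m) *\<^sub>R x)" using mpos by simp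
    then have "f (t *\<^sub>R x) = real m *\<^sub>R f ((t / real m) *\<^sub>R x)"
      by (metis additive_nat[of f, OF add])
    then have "f (t *\<^sub>R x) = real m *\<^sub>R ((t / real m) *\<^sub>R f x)"
      by (simp only: realhom_small[OF tm])
    also have "\<dots> = t *\<^sub>R f x" using mpos by simp
    finally show ?thesis .
  qed
  have chom: "f (c *\<^sub>C x) = c *\<^sub>C f x" for c x
  proof (cases "c = 0")
    case True then show ?thesis using f0 by (simp add: scaleC_zero)
  next
    case False
    define u where "u = c / complex_of_real (cmod c)"
    have u1: "cmod u = 1" unfolding u_def using False by (simp add: norm_divide)
    have cu: "c = complex_of_real (cmod c) * u" unfolding u_def using False by simp
    have "f (c *\<^sub>C x) = f (cmod c *\<^sub>R (u *\<^sub>C x))"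
      by (subst cu) (simp add: scaleC_scaleC[symmetric] scaleC_of_real)
    also have "\<dots> = cmod c *\<^sub>R (u *\<^sub>C f x)" by (simp add: realhom hom u1)
    also have "\<dots> = c *\<^sub>C f x"
      by (subst (2) cu) (simp add: scaleC_scaleC[symmetric] scaleC_of_real)
    finally show ?thesis .
  qed
  have jord: "f (spow a (n - 1)) = jordan_sum n f a" for a
  proof -
    let ?N = "norm (f (spow a (n - 1)) - jordan_sum n f a)"
    have base: "norm (f (spow b (n - 1)) - jordan_sum n f b) \<le> \<theta> * norm b powr (2*r)" for b
      using P[of 1 0 0 b] f0 assms(2) by (simp add: scaleC_one)
    have sn: "Suc (n - 1) = n" using n2 by simp
    have "?N = 0"
    proof (rule vanish[where b="2 powr (2*r)" and c="2^n" and C="\<theta> * norm a powr (2*r)"])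
      fix k :: nat
      let ?t = "(2::real)^k"
      have "f (spow (?t *\<^sub>R a) (n - 1)) - jordan_sum n f (?t *\<^sub>R a)
           = ?t^n *\<^sub>R (f (spow a (n - 1)) - jordan_sum n f a)"
        using pow[of "k*n"] spow_scale[of ?t a "n - 1", unfolded sn]
        by (simp add:  jordan_scale[OF n2 pow[of k a]] power_mult scaleR_diff_right)
      then have "(2^n)^k * ?N = norm (f (spow (?t *\<^sub>R a) (n - 1)) - jordan_sum n f (?t *\<^sub>R a))"
        by (simp add: power_mult[symmetric] mult.commute)
      also have "\<dots> \<le> \<theta> * norm (?t *\<^sub>R a) powr (2*r)" by (rule base)
      also have "\<dots> = \<theta> * norm a powr (2*r) * (2 powr (2*r))^k"
        by (simp add: powr_mult pow2_powr)
      finally show "(2^n)^k * ?N \<le> \<theta> * norm a powr (2*r) * (2 powr (2*r))^k" .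
    next
      have "(2::real) \<le> 2^n" using n2
        by (metis one_le_numeral power_increasing power_one_right order_trans one_le_numeral le_trans)
      then show "2 powr (2*r) < 2^n" using b1 by linarith
    qed (use b0 in auto)
    then show ?thesis by simp
  qed
  have fJ: "n_jordan_derivation n f"
    unfolding n_jordan_derivation_def using add chom jord by blast
  let ?K = "3 powr r * \<theta> / (2 - 2 powr r)"
  have Kpos: "?K \<ge> 0"
  proof -
    have "(2::real) powr r < 2" using powr_less_mono[of r 1 2] assms(3) by simp
    then show ?thesis using assms(4) by simp
  qed
  show ?thesis
  proof (rule ex1I[of _ f])
    show "n_jordan_derivation n f \<and> (\<forall>x. norm (f x - f x) \<le> ?K * norm x powr (2 * r))"
      using fJ Kpos by (simp del: times_divide_eq_left divide_le_0_iff zero_le_divide_iff)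
  next
    fix D assume D: "n_jordan_derivation n D \<and> (\<forall>x. norm (f x - D x) \<le> ?K * norm x powr (2 * r))"
    have Dadd: "D (x + y) = D x + D y" for x y using D unfolding n_jordan_derivation_def by blast
    show "D = f"
    proof
      fix x
      let ?N = "norm (f x - D x)"
      have "?N = 0"
      proof (rule vanish[where b="2 powr (2*r)" and c=2 and C="?K * norm x powr (2*r)"])
        fix k :: nat
        let ?t = "(2::real)^k"
        have "f (?t *\<^sub>R x) - D (?t *\<^sub>R x) = ?t *\<^sub>R (f x - D x)"
          using additive_nat[of D, OF Dadd, of "2^k" x]
          by (simp add: pow scaleR_diff_right)
        then have "2^k * ?N = norm (f (?t *\<^sub>R x) - D (?t *\<^sub>R x))" by simp
        also have "\<dots> \<le> ?K * norm (?t *\<^sub>R x) powr (2*r)" using D by blast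
        also have "\<dots> = ?K * norm x powr (2*r) * (2 powr (2*r))^k"
          by (simp add: powr_mult pow2_powr)
        finally show "2^k * ?N \<le> ?K * norm x powr (2*r) * (2 powr (2*r))^k" .
      qed (use b1 b0 in auto)
      then show "D x = f x" by simp
    qed
  qed
qed

end
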